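(* For every $n$ there exists a binary matrix $M \in \{0,1\}^{n \times n}$ with twin-width at most $3$ whose row-Hamming-coherence and column-Hamming-coherence satisfy $\mathscr{H}^r(M), \mathscr{H}^c(M) \in \Omega(n \log n)$.
   Context: The Hamming distance of $u,v\in\{0,1\}^n$ is $d(u,v)=\sum_{i=1}^n|u_i-v_i|$. Let $r^{(1)},\dots,r^{(n)}$ be the rows of $M$. For a permutation $\pi$ of $[n]$, the row-Hamming-sum is $\mathscr{H}^r_\pi(M)=\sum_{i=1}^{n-1} d(r^{(\pi(i))},r^{(\pi(i+1))})$, and the row-Hamming-coherence is $\mathscr{H}^r(M)=\min_\pi \mathscr{H}^r_\pi(M)$. The column-Hamming-coherence $\mathscr{H}^c(M)$ is defined analogously using the columns. Twin-width. A division of an $n\times n$ matrix $M$ is a pair $(\mathcal{R},\mathscr{C})$ of partitions of $[n]$ into contiguous non-empty intervals; the cell $(i,j)$ is the submatrix with rows in the $i$-th interval of $\mathcal{R}$ and columns in the $j$-th interval of $\mathscr{C}$; a cell is constant if all its entries are equal. A row (resp. column) of the division is the set of cells sharing a given interval of $\mathcal{R}$ (resp. $\mathscr{C}$). A merge sequence is a sequence of divisions $(\mathcal{R}_{2n-1},\mathscr{C}_{2n-1}),\dots,(\mathcal{R}_1,\mathscr{C}_1)$ starting from the singleton partitions, ending with $\mathcal{R}_1=\mathscr{C}_1=\{[n]\}$, each obtained from the previous by merging two adjacent intervals of either the row or the column partition. It is $d$-wide if in every division every row and every column contains at most $d$ non-constant cells. $M$ is $d$-twin-ordered if it admits a $d$-wide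 merge sequence; the twin-width of $M$ is the least $d$ such that some permutation of the rows and of the columns of $M$ is $d$-twin-ordered. *)

theory Defs
  imports Complex_Main "HOL-Combinatorics.Permutations"
begin

text \<open>An n x n binary matrix is modelled as a function M :: nat => nat => bool,
  with rows and columns indexed by {..<n} (0-based); True stands for 1, False for 0.
  Entries outside {..<n} x {..<n} are irrelevant.\<close>

type_synonym bmat = "nat \<Rightarrow> nat \<Rightarrow> bool"

definition transpose_mat :: "bmat \<Rightarrow> bmat" where
  "transpose_mat M = (\<lambda>i j. M j i)"

definition hamming :: "nat \<Rightarrow> (nat \<Rightarrow> bool) \<Rightarrow> (nat \<Rightarrow> bool) \<Rightarrow> nat" where
  "hamming n u v = (\<Sum>i<n. if u i = v i then 0 else 1)"

definition row_hamming_sum :: "nat \<Rightarrow> bmat \<Rightarrow> (nat \<Rightarrow> nat) \<Rightarrow> nat" where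
  "row_hamming_sum n M \<pi> = (\<Sum>i<n - 1. hamming n (M (\<pi> i)) (M (\<pi> (Suc i))))"

definition row_hamming_coherence :: "nat \<Rightarrow> bmat \<Rightarrow> nat" where
  "row_hamming_coherence n M = Min {row_hamming_sum n M \<pi> | \<pi>. \<pi> permutes {..<n}}"

definition col_hamming_coherence :: "nat \<Rightarrow> bmat \<Rightarrow> nat" where
  "col_hamming_coherence n M = row_hamming_coherence n (transpose_mat M)"

definition interval_partition :: "nat \<Rightarrow> nat set set \<Rightarrow> bool" where
  "interval_partition n P \<longleftrightarrow> \<Union>P = {..<n} \<and>
     (\<forall>A\<in>P. A \<noteq> {} \<and> (\<exists>a b. A = {a..<b})) \<and>
     (\<forall>A\<in>P. \<forall>B\<in>P. A \<noteq> B \<longrightarrow> A \<inter> B = {})"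

definition merge_adjacent :: "nat set set \<Rightarrow> nat set set \<Rightarrow> bool" where
  "merge_adjacent P P' \<longleftrightarrow> (\<exists>A\<in>P. \<exists>B\<in>P. A \<noteq> B \<and> (\<exists>a b. A \<union> B = {a..<b}) \<and>
      P' = insert (A \<union> B) (P - {A, B}))"

type_synonym division = "nat set set \<times> nat set set"

definition division_step :: "division \<Rightarrow> division \<Rightarrow> bool" where
  "division_step D D' \<longleftrightarrow>
     (merge_adjacent (fst D) (fst D') \<and> snd D' = snd D) \<or>
     (fst D' = fst D \<and> merge_adjacent (snd D) (snd D'))"

definition constant_cell :: "bmat \<Rightarrow> nat set \<Rightarrow> nat set \<Rightarrow> bool" where
  "constant_cell M X Y \<longleftrightarrow> (\<forall>i\<in>X. \<forall>j\<in>Y. \<forall>i'\<in>X. \<forall>j'\<in>Y. M i j = M i' j')"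

definition d_wide :: "nat \<Rightarrow> bmat \<Rightarrow> division \<Rightarrow> bool" where
  "d_wide d M D \<longleftrightarrow>
     (\<forall>X\<in>fst D. card {Y\<in>snd D. \<not> constant_cell M X Y} \<le> d) \<and>
     (\<forall>Y\<in>snd D. card {X\<in>fst D. \<not> constant_cell M X Y} \<le> d)"

definition singleton_partition :: "nat \<Rightarrow> nat set set" where
  "singleton_partition n = {{i} | i. i < n}"

definition merge_sequence :: "nat \<Rightarrow> division list \<Rightarrow> bool" where
  "merge_sequence n ds \<longleftrightarrow> ds \<noteq> [] \<and>
     hd ds = (singleton_partition n, singleton_partition n) \<and>
     last ds = ({{..<n}}, {{..<n}}) \<and>
     (\<forall>k. Suc k < length ds \<longrightarrow> division_step (ds ! k) (ds ! Suc k))"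

definition twin_ordered :: "nat \<Rightarrow> nat \<Rightarrow> bmat \<Rightarrow> bool" where
  "twin_ordered n d M \<longleftrightarrow> (\<exists>ds. merge_sequence n ds \<and> (\<forall>D\<in>set ds. d_wide d M D))"

definition twin_width :: "nat \<Rightarrow> bmat \<Rightarrow> nat" where
  "twin_width n M = (LEAST d. \<exists>\<sigma> \<tau>. \<sigma> permutes {..<n} \<and> \<tau> permutes {..<n} \<and>
       twin_ordered n d (\<lambda>i j. M (\<sigma> i) (\<tau> j)))"

end

theory Submission
  imports Defs
begin

function ht :: "nat \<Rightarrow> nat" where
  "ht x = (if odd x then Suc (ht (x div 2)) else 0)"
  by auto
termination by (relation "measure id") (auto elim!: oddE)
declare ht.simps[simp del]

lemma m2: "(x::nat) mod 2^(Suc l) = x mod 2 + 2 * ((x div 2) mod 2^l)"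
  unfolding power_Suc mod_mult2_eq by simp

lemma ht_odd: "odd x \<Longrightarrow> ht x = Suc (ht (x div 2))"
  by (subst ht.simps) simp
lemma ht_even: "even x \<Longrightarrow> ht x = 0"
  by (subst ht.simps) simp

lemma ht_char: "l \<le> ht x \<longleftrightarrow> x mod 2^l = 2^l - 1"
proof (induction l arbitrary: x)
  case 0 then show ?case by simp
next
  case (Suc l)
  have m: "x mod 2^(Suc l) = x mod 2 + 2 * ((x div 2) mod 2^l)" by (rule m2)
  have p: "(2::nat)^l \<ge> 1" by simp
  have e: "(2::nat)^Suc l = 2 * 2^l" by simp
  show ?case
  proof (cases "odd x")
    case True
    then have x1: "x mod 2 = 1" by (simp add: odd_iff_mod_2_eq_one)
    have "Suc l \<le> ht x \<longleftrightarrow> l \<le> ht (x div 2)" using ht_odd[OF True] by simp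
    also have "\<dots> \<longleftrightarrow> (x div 2) mod 2^l = 2^l - 1" by (rule Suc.IH)
    also have "\<dots> \<longleftrightarrow> 1 + 2 * ((x div 2) mod 2^l) = 2 * 2^l - 1" using p by linarith
    finally show ?thesis using m e x1 by simp
  next
    case False
    then have x0: "x mod 2 = 0" by simp
    have "\<not> (2 * ((x div 2) mod 2^l) = 2 * 2^l - 1)"
    proof
      assume "2 * ((x div 2) mod 2^l) = 2 * 2^l - 1"
      moreover have "\<forall>a b::nat. b \<ge> 1 \<longrightarrow> 2*a \<noteq> 2*b - 1" by presburger
      ultimately show False using p by blast
    qed
    then show ?thesis using m x0 ht_even[of x] False by simp
  qed
qed

definition inblk :: "nat \<Rightarrow> nat \<Rightarrow> nat \<Rightarrow> bool" where
  "inblk l c z \<longleftrightarrow> z div 2^l = c \<and> ht z < l"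

definition anc :: "nat \<Rightarrow> nat \<Rightarrow> bool" where
  "anc x y \<longleftrightarrow> inblk (Suc (ht x)) (x div 2^(Suc (ht x))) y"

definition tcomp :: "nat \<Rightarrow> nat \<Rightarrow> bool" where
  "tcomp x y \<longleftrightarrow> anc x y \<or> anc y x"

lemma tcomp_sym: "tcomp x y = tcomp y x"
  unfolding tcomp_def by blast

lemma anc_self: "anc x x"
  unfolding anc_def inblk_def by simp

lemma div_div_pow: "g \<le> l \<Longrightarrow> (z::nat) div 2^g div 2^(l-g) = z div 2^l"
  by (metis div_mult2_eq le_add_diff_inverse power_add)

lemma inblk_up: "inblk g c z \<Longrightarrow> g \<le> l \<Longrightarrow> inblk l (c div 2^(l-g)) z"
  unfolding inblk_def using div_div_pow[of g l z] by auto

lemma anc_inblk: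
  assumes "inblk l c x" "anc x y" shows "inblk l c y"
proof -
  have h: "Suc (ht x) \<le> l" using assms(1) unfolding inblk_def by simp
  have a: "inblk (Suc (ht x)) (x div 2^(Suc (ht x))) y" using assms(2) unfolding anc_def .
  have "inblk l (x div 2^(Suc (ht x)) div 2^(l - Suc (ht x))) y" by (rule inblk_up[OF a h])
  moreover have "x div 2^(Suc (ht x)) div 2^(l - Suc (ht x)) = c"
    using div_div_pow[OF h, of x] assms(1) unfolding inblk_def by simp
  ultimately show ?thesis by simp
qed

lemma K5:
  assumes "inblk l c x" "inblk l c' y" "c \<noteq> c'" shows "\<not> tcomp x y"
proof
  assume "tcomp x y"
  then show False
  proof (unfold tcomp_def, elim disjE)
    assume "anc x y" then have "inblk l c y" using anc_inblk assms(1) by blast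
    then show False using assms(2,3) unfolding inblk_def by simp
  next
    assume "anc y x" then have "inblk l c' x" using anc_inblk assms(2) by blast
    then show False using assms(1,3) unfolding inblk_def by simp
  qed
qed

lemma Klem:
  assumes nx: "\<not> inblk l c x" and y: "inblk l c y" and y': "inblk l c y'"
  shows "tcomp x y = tcomp x y'"
proof -
  have ny: "\<not> anc y x" using anc_inblk[OF y] nx by blast
  have ny': "\<not> anc y' x" using anc_inblk[OF y'] nx by blast
  have "anc x y = anc x y'"
  proof (cases "Suc (ht x) \<le> l")
    case True
    have "\<not> anc x y"
    proof
      assume a: "anc x y"
      have "x div 2^l = c"
        using a y div_div_pow[OF True, of x] div_div_pow[OF True, of y]
        unfolding anc_def inblk_def by simp
      then show False using nx True unfolding inblk_def by simp
    qed
    moreover have "\<not> anc x y'"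
    proof
      assume a: "anc x y'"
      have "x div 2^l = c"
        using a y' div_div_pow[OF True, of x] div_div_pow[OF True, of y']
        unfolding anc_def inblk_def by simp
      then show False using nx True unfolding inblk_def by simp
    qed
    ultimately show ?thesis by simp
  next
    case False
    then have le: "l \<le> Suc (ht x)" by simp
    have "y div 2^(Suc (ht x)) = c div 2^(Suc (ht x) - l)"
      using div_div_pow[OF le, of y] y unfolding inblk_def by simp
    moreover have "y' div 2^(Suc (ht x)) = c div 2^(Suc (ht x) - l)"
      using div_div_pow[OF le, of y'] y' unfolding inblk_def by simp
    moreover have "ht y < Suc (ht x)" "ht y' < Suc (ht x)"
      using y y' False unfolding inblk_def by auto
    ultimately show ?thesis unfolding anc_def inblk_def by simp
  qed
  then show ?thesis unfolding tcomp_def using ny ny' by simp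
qed

lemma ht_lt_iff: "ht z < l \<longleftrightarrow> z mod 2^l \<noteq> 2^l - 1"
  using ht_char[of l z] by linarith

lemma blk_set: "{z. inblk l e z} = {e*2^l ..< e*2^l + (2^l - 1)}"
proof (intro set_eqI iffI)
  fix z assume "z \<in> {z. inblk l e z}"
  then have a: "z div 2^l = e" "z mod 2^l \<noteq> 2^l - 1" unfolding inblk_def ht_lt_iff by auto
  have b: "z = e * 2^l + z mod 2^l" using a(1) by (metis div_mult_mod_eq)
  have "z mod 2^l < 2^l" by simp
  then have "z mod 2^l < 2^l - 1" using a(2) by linarith
  then show "z \<in> {e*2^l ..< e*2^l + (2^l - 1)}" using b by simp
next
  fix z assume z: "z \<in> {e*2^l ..< e*2^l + (2^l - 1)}"
  then obtain r where r: "z = e*2^l + r" "r < 2^l - 1"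
    by (metis atLeastLessThan_iff le_Suc_ex nat_add_left_cancel_less)
  have p: "(0::nat) < 2^l" by simp
  have "z div 2^l = e" using r p by simp
  moreover have "z mod 2^l = r" using r p by simp
  ultimately show "z \<in> {z. inblk l e z}" using r unfolding inblk_def ht_lt_iff by auto
qed

lemma blk_card: "card {z. inblk l e z} = 2^l - 1"
  unfolding blk_set by simp

lemma ht_lt: "x < 2^K - 1 \<Longrightarrow> ht x < K"
proof (rule ccontr)
  assume "x < 2^K - 1" "\<not> ht x < K"
  then have "x mod 2^K = 2^K - 1" using ht_char[of K x] by simp
  moreover have "x mod 2^K \<le> x" by simp
  ultimately show False using \<open>x < 2^K - 1\<close> by simp
qed

lemma blk_bound:
  assumes z: "inblk l e z" and t: "t div 2^l = e" "t < 2^K" and l: "l \<le> K"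
  shows "z < 2^K - 1"
proof -
  have "z \<in> {e*2^l ..< e*2^l + (2^l - 1)}" using z blk_set by blast
  then have z1: "z < e*2^l + 2^l - 1" by simp
  have "e * 2^l \<le> t" using t(1) by (metis div_mult_mod_eq le_add1)
  then have "e * 2^l < 2^K" using t(2) by simp
  moreover have "(2::nat)^K = 2^(K-l) * 2^l" using l by (simp add: power_add[symmetric])
  ultimately have "e < 2^(K-l)" by simp
  then have "(e+1) * 2^l \<le> 2^(K-l) * 2^l" by (simp del: mult_Suc)
  then have "e*2^l + 2^l \<le> 2^K" using \<open>(2::nat)^K = 2^(K-l) * 2^l\<close> by simp
  then show ?thesis using z1 by simp
qed

lemma mod_Suc_pow: "(y::nat) mod 2^(Suc h) = y mod 2^h + 2^h * ((y div 2^h) mod 2)"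
  by (metis mod_mult2_eq power_Suc2 add.commute)

lemma top_mod:
  assumes "ht y = h" shows "y mod 2^(Suc h) = 2^h - 1"
proof -
  have a: "y mod 2^h = 2^h - 1" using ht_char[of h y] assms by simp
  have b: "y mod 2^(Suc h) \<noteq> 2^(Suc h) - 1" using ht_char[of "Suc h" y] assms by simp
  have "(y div 2^h) mod 2 = 0 \<or> (y div 2^h) mod 2 = 1" by auto
  then show ?thesis using a b mod_Suc_pow[of y h] by auto
qed

lemma div_div_comm: "(a::nat) div b div c = a div c div b"
  by (metis div_mult2_eq mult.commute)

lemma div_pow_Suc: "(z::nat) div 2^(Suc h) = z div 2^h div 2"
  by (metis div_mult2_eq power_Suc2)

lemma anc_split:
  assumes "anc x y" "y \<noteq> x"
  shows "inblk (ht x) (2 * (x div 2^(Suc (ht x)))) y \<or> inblk (ht x) (2 * (x div 2^(Suc (ht x))) + 1) y"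
proof -
  let ?h = "ht x" let ?c = "x div 2^(Suc (ht x))"
  have y1: "y div 2^(Suc ?h) = ?c" "ht y < Suc ?h" using assms(1) unfolding anc_def inblk_def by auto
  have "ht y \<noteq> ?h"
  proof
    assume "ht y = ?h"
    then have "y mod 2^(Suc ?h) = 2^?h - 1" by (rule top_mod)
    moreover have "x mod 2^(Suc ?h) = 2^?h - 1" by (rule top_mod) simp
    ultimately have "y = x" using y1(1) by (metis div_mult_mod_eq)
    then show False using assms(2) by simp
  qed
  then have hy: "ht y < ?h" using y1(2) by simp
  have "y div 2^?h div 2 = ?c" using y1(1) by (metis div_pow_Suc)
  then have "y div 2^?h = 2 * ?c \<or> y div 2^?h = 2 * ?c + 1" by auto
  then show ?thesis using hy unfolding inblk_def by auto
qed

lemma child_anc: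
  assumes "inblk (ht x) (2 * (x div 2^(Suc (ht x)))) z \<or> inblk (ht x) (2 * (x div 2^(Suc (ht x))) + 1) z"
  shows "anc x z"
proof -
  have "z div 2^(ht x) div 2 = x div 2^(Suc (ht x))" "ht z < ht x"
    using assms unfolding inblk_def by auto
  then show ?thesis unfolding anc_def inblk_def by (metis div_pow_Suc less_SucI)
qed

lemma anc_ht: "anc y x \<Longrightarrow> x \<noteq> y \<Longrightarrow> ht x < ht y"
  using anc_split[of y x] unfolding inblk_def by auto

definition Mt :: "nat \<Rightarrow> bmat" where
  "Mt K x y \<longleftrightarrow> x < 2^K - 1 \<and> y < 2^K - 1 \<and> tcomp x y"

lemma hamming_card: "hamming n u v = card {i. i < n \<and> u i \<noteq> v i}"
proof -
  have "hamming n u v = (\<Sum>i\<in>{..<n}. if u i \<noteq> v i then 1 else 0)"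
    unfolding hamming_def by (rule sum.cong) auto
  also have "\<dots> = card ({..<n} \<inter> {i. u i \<noteq> v i})"
    by (simp add: sum.If_cases)
  also have "{..<n} \<inter> {i. u i \<noteq> v i} = {i. i < n \<and> u i \<noteq> v i}" by auto
  finally show ?thesis .
qed

lemma hamming_ge:
  assumes "Z \<subseteq> {..<n}" "\<forall>z\<in>Z. u z \<noteq> v z"
  shows "card Z \<le> hamming n u v"
  unfolding hamming_card using assms by (intro card_mono) auto

lemma iso:
  assumes x: "x < 2^K - 1" and y: "y < n" "y \<noteq> x" and n: "2^K - 1 \<le> n"
  shows "2^(ht x) - 1 \<le> hamming n (Mt K x) (Mt K y)"
proof -
  define h where "h = ht x"
  define c where "c = x div 2^(Suc h)"
  define L where "L = {z. inblk h (2*c) z}"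
  define R where "R = {z. inblk h (2*c+1) z}"
  have hK: "Suc h \<le> K" using ht_lt[OF x] h_def by simp
  have x2: "x < 2^K" using x by simp
  have bnd: "z < 2^K - 1" if "inblk (Suc h) c z" for z
    using blk_bound[OF that _ x2 hK] c_def by simp
  have xin: "inblk (Suc h) c x" unfolding inblk_def c_def h_def by simp
  have Lb: "z < 2^K - 1" if "z \<in> L" for z
  proof -
    have "inblk (Suc h) (2*c div 2^(Suc h - h)) z" using that inblk_up[of h "2*c" z "Suc h"] L_def by simp
    then show ?thesis using bnd by simp
  qed
  have Rb: "z < 2^K - 1" if "z \<in> R" for z
  proof -
    have "inblk (Suc h) ((2*c+1) div 2^(Suc h - h)) z" using that inblk_up[of h "2*c+1" z "Suc h"] R_def by simp
    then show ?thesis using bnd by simp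
  qed
  have Lx: "Mt K x z" if "z \<in> L" for z
    using that Lb[OF that] x child_anc[of x z] unfolding Mt_def tcomp_def L_def c_def h_def by auto
  have Rx: "Mt K x z" if "z \<in> R" for z
    using that Rb[OF that] x child_anc[of x z] unfolding Mt_def tcomp_def R_def c_def h_def by auto
  have cL: "card L = 2^h - 1" unfolding L_def by (rule blk_card)
  have cR: "card R = 2^h - 1" unfolding R_def by (rule blk_card)
  have Ln: "L \<subseteq> {..<n}" using Lb n by fastforce
  have Rn: "R \<subseteq> {..<n}" using Rb n by fastforce
  show ?thesis
  proof (cases "y < 2^K - 1")
    case False
    have "\<forall>z\<in>L. Mt K x z \<noteq> Mt K y z" using Lx False unfolding Mt_def by auto
    then show ?thesis using hamming_ge[OF Ln] cL h_def by fastforce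
  next
    case yN: True
    show ?thesis
    proof (cases "anc x y")
      case True
      have "inblk h (2*c) y \<or> inblk h (2*c+1) y" using anc_split[OF True y(2)] h_def c_def by simp
      then show ?thesis
      proof
        assume yl: "inblk h (2*c) y"
        have "\<forall>z\<in>R. Mt K x z \<noteq> Mt K y z"
          using Rx K5[OF yl] unfolding Mt_def R_def by auto
        then show ?thesis using hamming_ge[OF Rn] cR h_def by fastforce
      next
        assume yr: "inblk h (2*c+1) y"
        have "\<forall>z\<in>L. Mt K x z \<noteq> Mt K y z"
          using Lx K5[OF yr] unfolding Mt_def L_def by auto
        then show ?thesis using hamming_ge[OF Ln] cL h_def by fastforce
      qed
    next
      case nxy: False
      show ?thesis
      proof (cases "anc y x")
        case True
        define g where "g = ht y"
        define d where "d = y div 2^(Suc g)"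
        have hg: "h < g" using anc_ht[OF True] y(2) h_def g_def by auto
        have gK: "Suc g \<le> K" using ht_lt[OF yN] g_def by simp
        have y2: "y < 2^K" using yN by simp
        have bnd2: "z < 2^K - 1" if "inblk g e z" "e div 2 = d" for z e
        proof -
          have "inblk (Suc g) (e div 2^(Suc g - g)) z" using inblk_up[OF that(1), of "Suc g"] by simp
          then show ?thesis using blk_bound[OF _ _ y2 gK] that(2) d_def by simp
        qed
        have cg: "2^h - 1 \<le> (2::nat)^g - 1" using hg
          by (meson diff_le_mono less_imp_le_nat one_le_numeral power_increasing)
        have "inblk g (2*d) x \<or> inblk g (2*d+1) x" using anc_split[OF True] y(2) g_def d_def by auto
        then show ?thesis
        proof
          assume xl: "inblk g (2*d) x"
          let ?Z = "{z. inblk g (2*d+1) z}"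
          have Zb: "z < 2^K - 1" if "z \<in> ?Z" for z using bnd2[of "2*d+1" z] that by simp
          have "\<forall>z\<in>?Z. Mt K x z \<noteq> Mt K y z"
            using Zb K5[OF xl] child_anc[of y] yN x unfolding Mt_def tcomp_def g_def d_def by auto
          moreover have "?Z \<subseteq> {..<n}" using Zb n by fastforce
          ultimately have "card ?Z \<le> hamming n (Mt K x) (Mt K y)" using hamming_ge by blast
          then show ?thesis using blk_card cg h_def by simp
        next
          assume xr: "inblk g (2*d+1) x"
          let ?Z = "{z. inblk g (2*d) z}"
          have Zb: "z < 2^K - 1" if "z \<in> ?Z" for z using bnd2[of "2*d" z] that by simp
          have "\<forall>z\<in>?Z. Mt K x z \<noteq> Mt K y z"
            using Zb K5[OF xr] child_anc[of y] yN x unfolding Mt_def tcomp_def g_def d_def by auto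
          moreover have "?Z \<subseteq> {..<n}" using Zb n by fastforce
          ultimately have "card ?Z \<le> hamming n (Mt K x) (Mt K y)" using hamming_ge by blast
          then show ?thesis using blk_card cg h_def by simp
        qed
      next
        case nyx: False
        have nyb: "\<not> inblk (Suc h) c y" using nxy unfolding anc_def h_def c_def by simp
        have "\<forall>z\<in>L. Mt K x z \<noteq> Mt K y z"
        proof
          fix z assume zL: "z \<in> L"
          have zb: "inblk (Suc h) c z"
            using zL inblk_up[of h "2*c" z "Suc h"] unfolding L_def by simp
          have "tcomp y z = tcomp y x" using Klem[OF nyb zb xin] .
          also have "\<not> tcomp y x" using nxy nyx unfolding tcomp_def by simp
          finally show "Mt K x z \<noteq> Mt K y z" using Lx[OF zL] unfolding Mt_def by simp
        qed
        then show ?thesis using hamming_ge[OF Ln] cL h_def by fastforce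
      qed
    qed
  qed
qed

lemma sum_pairs: fixes f :: "nat \<Rightarrow> 'a::comm_monoid_add" and m :: nat
  shows "(\<Sum>x<2*m. f x) = (\<Sum>y<m. f (2*y) + f (2*y+1))"
  by (induction m) (simp_all add: add.assoc)

lemma ht_2y: "ht (2*y) = 0" by (rule ht_even) simp
lemma ht_2y1: "ht (2*y+1) = Suc (ht y)"
  by (subst ht_odd) simp_all
lemma ht_2y1': "ht (Suc (2*y)) = Suc (ht y)"
  using ht_2y1 by simp

lemma S_formula: "2 * (\<Sum>x<2^K. (2::nat)^(ht x)) = (K+2) * 2^K"
proof (induction K)
  case 0 then show ?case by (simp add: ht_even)
next
  case (Suc K)
  have "(\<Sum>x<2^Suc K. (2::nat)^(ht x)) = (\<Sum>y<2^K. 2^(ht (2*y)) + 2^(ht (2*y+1)))"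
    using sum_pairs[of "\<lambda>x. (2::nat)^(ht x)" "2^K"] by simp
  also have "\<dots> = (\<Sum>y<2^K. 1 + 2 * 2^(ht y))" by (simp add: ht_2y ht_2y1')
  also have "\<dots> = (\<Sum>y<(2::nat)^K. (1::nat)) + (\<Sum>y<2^K. 2 * 2^(ht y))" by (rule sum.distrib)
  also have "\<dots> = 2^K + 2 * (\<Sum>y<2^K. 2^(ht y))" by (simp add: sum_distrib_left)
  finally show ?case using Suc.IH by (simp add: algebra_simps)
qed

lemma ht_top: "ht (2^K - 1) \<le> K"
proof (rule ccontr)
  assume "\<not> ht (2^K - 1) \<le> K"
  then have "Suc K \<le> ht (2^K - 1)" by simp
  then have "(2^K - 1) mod 2^Suc K = (2::nat)^Suc K - 1" using ht_char by blast
  moreover have "(2::nat)^K - 1 < 2^Suc K" by (simp add: less_imp_diff_less)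
  ultimately have "(2::nat)^K - 1 = 2^Suc K - 1" by simp
  moreover have "(2::nat)^K < 2^Suc K" by simp
  moreover have "(1::nat) \<le> 2^K" by simp
  ultimately show False by linarith
qed

lemma path_lb:
  fixes f :: "nat \<Rightarrow> nat"
  assumes p: "\<pi> permutes {..<n}" and n: "1 \<le> n"
    and iso: "\<And>x y. x < n \<Longrightarrow> y < n \<Longrightarrow> y \<noteq> x \<Longrightarrow> f x \<le> hamming n (M x) (M y)"
  shows "(\<Sum>x<n. f x) \<le> row_hamming_sum n M \<pi> + f (\<pi> (n-1))"
proof -
  have inj: "inj \<pi>" using p permutes_inj by blast
  have im: "\<pi> i < n" if "i < n" for i using permutes_in_image[OF p] that by simp
  have "(\<Sum>x<n. f x) = (\<Sum>i<n. f (\<pi> i))"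
    using sum.reindex_bij_betw[OF permutes_imp_bij[OF p], of f] by simp
  also have "\<dots> = (\<Sum>i<n-1. f (\<pi> i)) + f (\<pi> (n-1))"
  proof -
    obtain m where m: "n = Suc m" using n by (cases n) auto
    show ?thesis unfolding m by simp
  qed
  also have "(\<Sum>i<n-1. f (\<pi> i)) \<le> (\<Sum>i<n-1. hamming n (M (\<pi> i)) (M (\<pi> (Suc i))))"
  proof (rule sum_mono)
    fix i assume "i \<in> {..<n-1}"
    then have i: "i < n" "Suc i < n" by auto
    have "\<pi> (Suc i) \<noteq> \<pi> i" using inj by (metis injD n_not_Suc_n)
    then show "f (\<pi> i) \<le> hamming n (M (\<pi> i)) (M (\<pi> (Suc i)))"
      using iso im i by blast
  qed
  finally show ?thesis unfolding row_hamming_sum_def by simp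
qed

lemma coh_ge:
  assumes "\<And>\<pi>. \<pi> permutes {..<n} \<Longrightarrow> L \<le> row_hamming_sum n M \<pi>"
  shows "L \<le> row_hamming_coherence n M"
proof -
  let ?A = "{row_hamming_sum n M \<pi> | \<pi>. \<pi> permutes {..<n}}"
  have "?A = (\<lambda>\<pi>. row_hamming_sum n M \<pi>) ` {\<pi>. \<pi> permutes {..<n}}" by auto
  then have fin: "finite ?A" using finite_permutations[of "{..<n}"] by simp
  have ne: "?A \<noteq> {}" using permutes_id[of "{..<n}"] by blast
  show ?thesis unfolding row_hamming_coherence_def using Min_ge_iff[OF fin ne] assms by blast
qed

definition fw :: "nat \<Rightarrow> nat \<Rightarrow> nat" where
  "fw K x = (if x < 2^K - 1 then 2^(ht x) - 1 else 0)"

lemma coh_Mt: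
  assumes n: "2^K - 1 \<le> n" "1 \<le> n"
  shows "(K+2) * 2^K \<le> 2 * row_hamming_coherence n (Mt K) + 6 * 2^K"
proof -
  let ?N = "(2::nat)^K - 1"
  have fwb: "fw K x \<le> 2^K" for x
  proof (cases "x < ?N")
    case True
    then have "ht x < K" by (rule ht_lt)
    then have "(2::nat)^(ht x) \<le> 2^K" by (simp add: power_increasing)
    moreover have "fw K x = 2^(ht x) - 1" using True unfolding fw_def by simp
    ultimately show ?thesis by linarith
  qed (simp add: fw_def)
  have isoF: "fw K x \<le> hamming n (Mt K x) (Mt K y)" if "x < n" "y < n" "y \<noteq> x" for x y
    using iso[of x K y n] that n unfolding fw_def by auto
  have sN: "(\<Sum>x<n. fw K x) = (\<Sum>x<?N. fw K x)"
    by (rule sum.mono_neutral_right) (use n in \<open>auto simp: fw_def\<close>)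
  have s1: "(\<Sum>x<?N. fw K x) + ?N = (\<Sum>x<?N. (2::nat)^(ht x))"
  proof -
    have "(\<Sum>x<?N. fw K x + 1) = (\<Sum>x<?N. fw K x) + (\<Sum>x<?N. (1::nat))" by (rule sum.distrib)
    then have "(\<Sum>x<?N. fw K x) + ?N = (\<Sum>x<?N. fw K x + 1)" by simp
    also have "\<dots> = (\<Sum>x<?N. (2::nat)^(ht x))"
      by (rule sum.cong) (auto simp: fw_def)
    finally show ?thesis .
  qed
  have s2: "(\<Sum>x<2^K. (2::nat)^(ht x)) = (\<Sum>x<?N. (2::nat)^(ht x)) + 2^(ht ?N)"
  proof -
    have "(2::nat)^K = Suc ?N" by simp
    then show ?thesis by (metis sum.lessThan_Suc)
  qed
  have s3: "(2::nat)^(ht ?N) \<le> 2^K" using ht_top by (simp add: power_increasing)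
  have key: "(\<Sum>x<n. fw K x) \<le> row_hamming_coherence n (Mt K) + 2^K"
  proof -
    have "(\<Sum>x<n. fw K x) - 2^K \<le> row_hamming_coherence n (Mt K)"
    proof (rule coh_ge)
      fix \<pi> :: "nat \<Rightarrow> nat" assume p: "\<pi> permutes {..<n}"
      have "(\<Sum>x<n. fw K x) \<le> row_hamming_sum n (Mt K) \<pi> + fw K (\<pi> (n-1))"
        by (rule path_lb[OF p n(2)]) (rule isoF)
      then show "(\<Sum>x<n. fw K x) - 2^K \<le> row_hamming_sum n (Mt K) \<pi>"
        using fwb[of "\<pi> (n-1)"] by linarith
    qed
    then show ?thesis by linarith
  qed
  have "?N \<le> 2^K" by simp
  then show ?thesis using S_formula[of K] s1 s2 s3 sN key by linarith
qed


definition parts :: "nat \<Rightarrow> nat set \<Rightarrow> nat set set" where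
  "parts n D = {{a..<b} | a b. a < b \<and> (a = 0 \<or> a \<in> D) \<and> (b = n \<or> b \<in> D) \<and> (\<forall>d\<in>D. d \<le> a \<or> b \<le> d)}"

lemma partsE:
  assumes "X \<in> parts n D"
  obtains a b where "X = {a..<b}" "a < b" "a = 0 \<or> a \<in> D" "b = n \<or> b \<in> D" "\<forall>d\<in>D. d \<le> a \<or> b \<le> d"
  using assms unfolding parts_def by blast

lemma partsI:
  assumes "a < b" "a = 0 \<or> a \<in> D" "b = n \<or> b \<in> D" "\<forall>d\<in>D. d \<le> a \<or> b \<le> d"
  shows "{a..<b} \<in> parts n D"
  using assms unfolding parts_def by blast

lemma parts_sub: "D \<subseteq> {1..<n} \<Longrightarrow> X \<in> parts n D \<Longrightarrow> X \<subseteq> {..<n}"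
  by (erule partsE) auto

lemma parts_disj:
  assumes D: "D \<subseteq> {1..<n}" and X: "X \<in> parts n D" and Y: "Y \<in> parts n D"
    and z: "z \<in> X" "z \<in> Y"
  shows "X = Y"
proof -
  obtain a b where Xab: "X = {a..<b}" "a < b" "a = 0 \<or> a \<in> D" "b = n \<or> b \<in> D" "\<forall>d\<in>D. d \<le> a \<or> b \<le> d"
    using X by (rule partsE)
  obtain a' b' where Yab: "Y = {a'..<b'}" "a' < b'" "a' = 0 \<or> a' \<in> D" "b' = n \<or> b' \<in> D" "\<forall>d\<in>D. d \<le> a' \<or> b' \<le> d"
    using Y by (rule partsE)
  have bn: "b \<le> n" "b' \<le> n" using Xab(4) Yab(4) D by auto
  have "a = a'"
  proof (rule ccontr)
    assume "a \<noteq> a'"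
    then have "a < a' \<or> a' < a" by auto
    then show False
    proof
      assume "a < a'" then have "a' \<in> D" using Yab(3) by auto
      then show False using Xab(5) \<open>a < a'\<close> z Xab(1) Yab(1) by fastforce
    next
      assume "a' < a" then have "a \<in> D" using Xab(3) by auto
      then show False using Yab(5) \<open>a' < a\<close> z Xab(1) Yab(1) by fastforce
    qed
  qed
  moreover have "b = b'"
  proof (rule ccontr)
    assume "b \<noteq> b'"
    then have "b < b' \<or> b' < b" by auto
    then show False
    proof
      assume "b < b'" then have "b \<in> D" using Xab(4) bn by auto
      then show False using Yab(5) \<open>b < b'\<close> z Xab(1) Yab(1) by fastforce
    next
      assume "b' < b" then have "b' \<in> D" using Yab(4) bn by auto
      then show False using Xab(5) \<open>b' < b\<close> z Xab(1) Yab(1) by fastforce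
    qed
  qed
  ultimately show ?thesis using Xab(1) Yab(1) by simp
qed

lemma parts_single: "parts n {1..<n} = singleton_partition n"
proof (intro set_eqI iffI)
  fix X assume "X \<in> parts n {1..<n}"
  then obtain a b where ab: "X = {a..<b}" "a < b" "b = n \<or> b \<in> {1..<n}" "\<forall>d\<in>{1..<n}. d \<le> a \<or> b \<le> d"
    by (rule partsE)
  have "b = Suc a"
  proof (rule ccontr)
    assume "b \<noteq> Suc a"
    then have "Suc a < b" using ab(2) by simp
    moreover have "b \<le> n" using ab(3) by auto
    ultimately show False using ab(4)[rule_format, of "Suc a"] by auto
  qed
  then have "X = {a}" "a < n" using ab(1,3) by auto
  then show "X \<in> singleton_partition n" unfolding singleton_partition_def by blast
next
  fix X assume "X \<in> singleton_partition n"
  then obtain i where i: "X = {i}" "i < n" unfolding singleton_partition_def by blast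
  have "{i..<Suc i} \<in> parts n {1..<n}"
    by (rule partsI) (use i in auto)
  then show "X \<in> parts n {1..<n}" using i by simp
qed

lemma parts_empty: "0 < n \<Longrightarrow> parts n {} = {{..<n}}"
proof (intro set_eqI iffI)
  fix X assume "0 < n" "X \<in> parts n {}"
  then show "X \<in> {{..<n}}" by (auto elim!: partsE simp: atLeast0LessThan)
next
  fix X assume "0 < n" "X \<in> {{..<n}}"
  then have "X = {0..<n}" by auto
  then show "X \<in> parts n {}" using \<open>0 < n\<close> by (auto intro: partsI)
qed

lemma parts_merge:
  assumes D: "D \<subseteq> {1..<n}" and d: "d \<in> D"
  shows "merge_adjacent (parts n D) (parts n (D - {d}))"
proof -
  have d1: "0 < d" "d < n" using D d by auto
  have finD: "finite D" using D finite_subset by blast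
  define a where "a = Max (insert 0 {x\<in>D. x < d})"
  have fa: "finite (insert 0 {x\<in>D. x < d})" using finD by simp
  have a_in: "a \<in> insert 0 {x\<in>D. x < d}" unfolding a_def using fa Max_in by blast
  have a1: "a < d" "a = 0 \<or> a \<in> D" using a_in d1 by auto
  have a2: "\<forall>x\<in>D. x < d \<longrightarrow> x \<le> a" unfolding a_def using fa by auto
  define b where "b = Min (insert n {x\<in>D. d < x})"
  have fb: "finite (insert n {x\<in>D. d < x})" using finD by simp
  have b_in: "b \<in> insert n {x\<in>D. d < x}" unfolding b_def using fb Min_in by blast
  have b1: "d < b" "b = n \<or> b \<in> D" using b_in d1 by auto
  have b2: "\<forall>x\<in>D. d < x \<longrightarrow> b \<le> x" unfolding b_def using fb by auto
  have bn: "b \<le> n" using b1 D by auto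
  have Dn: "\<forall>x\<in>D. 0 < x \<and> x < n" using D by auto
  define A where "A = {a..<d}"
  define B where "B = {d..<b}"
  have A: "A \<in> parts n D" unfolding A_def
    by (rule partsI) (use a1 a2 d in \<open>auto simp: not_le\<close>)
  have B: "B \<in> parts n D" unfolding B_def
    by (rule partsI) (use b1 b2 d in \<open>auto simp: not_le\<close>)
  have AB: "A \<noteq> B" unfolding A_def B_def using b1 by auto
  have U: "A \<union> B = {a..<b}" unfolding A_def B_def using a1 b1 by auto
  have "parts n (D - {d}) = insert (A \<union> B) (parts n D - {A, B})"
  proof (intro set_eqI iffI)
    fix X assume X: "X \<in> parts n (D - {d})"
    then obtain a' b' where ab: "X = {a'..<b'}" "a' < b'" "a' = 0 \<or> a' \<in> D - {d}"
       "b' = n \<or> b' \<in> D - {d}" "\<forall>e\<in>D - {d}. e \<le> a' \<or> b' \<le> e"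
      by (rule partsE)
    show "X \<in> insert (A \<union> B) (parts n D - {A, B})"
    proof (cases "a' < d \<and> d < b'")
      case T: True
      have "a' \<le> a" using ab(3) a2 T by auto
      moreover have "a \<le> a'"
      proof (cases "a = 0")
        case False
        then have "a \<in> D - {d}" using a1 by auto
        then have "a \<le> a' \<or> b' \<le> a" using ab(5) by blast
        then show ?thesis using T a1(1) by auto
      qed simp
      moreover have "b \<le> b'"
        using ab(4) b2 T bn by auto
      moreover have "b' \<le> b"
      proof (cases "b = n")
        case True then show ?thesis using ab(4) Dn by auto
      next
        case False
        then have "b \<in> D - {d}" using b1 by auto
        then have "b \<le> a' \<or> b' \<le> b" using ab(5) by blast
        then show ?thesis using T b1(1) by auto
      qed
      ultimately show ?thesis using ab(1) U by simp
    next
      case False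
      have "X \<in> parts n D" unfolding ab(1)
        by (rule partsI) (use ab False in auto)
      moreover have "X \<noteq> A"
      proof
        assume "X = A"
        then have "b' = d" using atLeastLessThan_inj(2)[of a' b' a d] ab(1,2) a1(1) A_def by simp
        then show False using ab(4) d1 by auto
      qed
      moreover have "X \<noteq> B"
      proof
        assume "X = B"
        then have "a' = d" using atLeastLessThan_inj(1)[of a' b' d b] ab(1,2) b1(1) B_def by simp
        then show False using ab(3) d1 by auto
      qed
      ultimately show ?thesis by simp
    qed
  next
    fix X assume X: "X \<in> insert (A \<union> B) (parts n D - {A, B})"
    show "X \<in> parts n (D - {d})"
    proof (cases "X = A \<union> B")
      case True
      show ?thesis unfolding True U
        by (rule partsI) (use a1 a2 b1 b2 in \<open>auto simp: not_le\<close>)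
    next
      case False
      then have X1: "X \<in> parts n D" "X \<noteq> A" "X \<noteq> B" using X by auto
      then obtain a' b' where ab: "X = {a'..<b'}" "a' < b'" "a' = 0 \<or> a' \<in> D"
         "b' = n \<or> b' \<in> D" "\<forall>e\<in>D. e \<le> a' \<or> b' \<le> e"
        by (elim partsE)
      have b'n: "b' \<le> n" using ab(4) Dn by auto
      have "a' \<noteq> d"
      proof
        assume ad: "a' = d"
        have "b \<le> b'" using ab(4) b2 ab(2) ad bn by auto
        moreover have "b' \<le> b" using b1(2) ab(5) b1(1) ad b'n by auto
        ultimately have "X = B" using ab(1) ad B_def by simp
        then show False using X1 by simp
      qed
      moreover have "b' \<noteq> d"
      proof
        assume bd: "b' = d"
        have "a' \<le> a" using ab(3) a2 ab(2) bd by auto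
        moreover have "a \<le> a'" using a1(2) ab(5) a1(1) bd by (cases "a = 0") auto
        ultimately have "X = A" using ab(1) bd A_def by simp
        then show False using X1 by simp
      qed
      ultimately show ?thesis unfolding ab(1)
        by (intro partsI) (use ab in auto)
    qed
  qed
  then show ?thesis unfolding merge_adjacent_def using A B AB U by blast
qed



lemma card_hit:
  assumes disj: "\<And>X Y z. X \<in> Q \<Longrightarrow> Y \<in> Q \<Longrightarrow> z \<in> X \<Longrightarrow> z \<in> Y \<Longrightarrow> X = Y"
    and S: "finite S"
  shows "card {Y\<in>Q. Y \<inter> S \<noteq> {}} \<le> card S"
proof -
  let ?f = "\<lambda>Y. SOME s. s \<in> Y \<inter> S"
  have f: "?f Y \<in> Y \<inter> S" if "Y \<in> {Y\<in>Q. Y \<inter> S \<noteq> {}}" for Y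
    proof -
    have "Y \<inter> S \<noteq> {}" using that by simp
    then obtain s where "s \<in> Y \<inter> S" by blast
    then show ?thesis by (rule someI)
  qed
  have "inj_on ?f {Y\<in>Q. Y \<inter> S \<noteq> {}}"
  proof (rule inj_onI)
    fix X Y assume X: "X \<in> {Y\<in>Q. Y \<inter> S \<noteq> {}}" and Y: "Y \<in> {Y\<in>Q. Y \<inter> S \<noteq> {}}" and e: "?f X = ?f Y"
    have "?f X \<in> X" "?f X \<in> Y" using f[OF X] f[OF Y] e by auto
    then show "X = Y" using disj X Y by blast
  qed
  moreover have "?f ` {Y\<in>Q. Y \<inter> S \<noteq> {}} \<subseteq> S" using f by blast
  ultimately show ?thesis using card_inj_on_le S by blast
qed

definition EE :: "nat \<Rightarrow> nat \<Rightarrow> nat \<Rightarrow> nat set" where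
  "EE K n h = {b. 0 < b \<and> b < n \<and> (2^K - 1 \<le> b \<or> b mod 2^h = 0 \<or> b mod 2^h = 2^h - 1)}"

lemma EE_sub: "EE K n h \<subseteq> {1..<n}" unfolding EE_def by auto

lemma mod_top_Suc: "(z::nat) mod 2^l = 2^l - 1 \<Longrightarrow> (Suc z) mod 2^l = 0"
proof -
  assume a: "z mod 2^l = 2^l - 1"
  have "Suc z mod 2^l = Suc (z mod 2^l) mod 2^l" by (simp add: mod_Suc_eq)
  also have "Suc (z mod 2^l) = 2^l" using a by simp
  finally show ?thesis by simp
qed

lemma cell:
  assumes X: "X \<in> parts n D" and E: "EE K n l \<subseteq> D" and Dn: "D \<subseteq> {1..<n}"
    and x: "x \<in> X" "x < 2^K - 1" and K: "1 \<le> K"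
  shows "X \<subseteq> {..<2^K - 1} \<and> ((X = {x} \<and> l \<le> ht x) \<or> (\<forall>z\<in>X. inblk l (x div 2^l) z))"
proof -
  let ?N = "(2::nat)^K - 1"
  obtain a b where ab: "X = {a..<b}" "a < b" "a = 0 \<or> a \<in> D" "b = n \<or> b \<in> D" "\<forall>d\<in>D. d \<le> a \<or> b \<le> d"
    using X by (rule partsE)
  have bn: "b \<le> n" using ab(4) Dn by auto
  have "(2::nat)^1 \<le> 2^K" using K by (rule power_increasing) simp
  then have N0: "0 < ?N" by simp
  have inE: "m \<in> D" if "0 < m" "m < n" "m mod 2^l = 0 \<or> m mod 2^l = 2^l - 1" for m
    using that E unfolding EE_def by auto
  have xab: "a \<le> x" "x < b" using x ab(1) by auto
  have XN: "b \<le> ?N"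
  proof (rule ccontr)
    assume "\<not> b \<le> ?N"
    then have "?N \<in> D" using E N0 bn unfolding EE_def by auto
    then have "?N \<le> a \<or> b \<le> ?N" using ab(5) by blast
    then show False using xab x(2) \<open>\<not> b \<le> ?N\<close> by linarith
  qed
  then have sub: "X \<subseteq> {..<?N}" using ab(1) by auto
  show ?thesis
  proof (cases "\<exists>z\<in>X. l \<le> ht z")
    case True
    then obtain z where z: "z \<in> X" "l \<le> ht z" by blast
    have zm: "z mod 2^l = 2^l - 1" using z(2) ht_char by blast
    have zab: "a \<le> z" "z < b" using z(1) ab(1) by auto
    have za: "z = a"
    proof (rule ccontr)
      assume "z \<noteq> a"
      then have "a < z" using zab by simp
      then have "z \<in> D" using inE[of z] zm zab bn by simp
      then have "z \<le> a \<or> b \<le> z" using ab(5) by blast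
      then show False using \<open>a < z\<close> zab by linarith
    qed
    have bS: "b = Suc a"
    proof (rule ccontr)
      assume "b \<noteq> Suc a"
      then have "Suc a < b" using ab(2) by simp
      then have "Suc z \<in> D" using inE[of "Suc z"] mod_top_Suc[OF zm] za bn by simp
      then have "Suc z \<le> a \<or> b \<le> Suc z" using ab(5) by blast
      then show False using za \<open>Suc a < b\<close> by linarith
    qed
    then have "X = {a}" using ab(1) by auto
    then have "X = {x} \<and> l \<le> ht x" using x(1) z za by auto
    then show ?thesis using sub by blast
  next
    case False
    then have hz: "\<forall>z\<in>X. ht z < l" by auto
    have dz: "z div 2^l = a div 2^l" if zX: "z \<in> X" for z
    proof (rule ccontr)
      assume ne: "z div 2^l \<noteq> a div 2^l"
      have zab: "a \<le> z" "z < b" using zX ab(1) by auto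
      have "a div 2^l \<le> z div 2^l" using zab(1) by (rule div_le_mono)
      then have lt: "a div 2^l < z div 2^l" using ne by simp
      define m where "m = z div 2^l * 2^l"
      have mz: "m \<le> z" unfolding m_def by (metis div_mult_mod_eq le_add1)
      have mdiv: "m div 2^l = z div 2^l" unfolding m_def by simp
      have am: "a < m"
      proof (rule ccontr)
        assume "\<not> a < m"
        then have "m div 2^l \<le> a div 2^l" by (simp add: div_le_mono)
        then show False using lt mdiv by simp
      qed
      have "m mod 2^l = 0" unfolding m_def by simp
      then have "m \<in> D" using inE[of m] am mz zab bn by simp
      then have "m \<le> a \<or> b \<le> m" using ab(5) by blast
      then show False using am mz zab by linarith
    qed
    have "\<forall>z\<in>X. inblk l (x div 2^l) z"
      using dz hz x(1) unfolding inblk_def by simp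
    then show ?thesis using sub by blast
  qed
qed

lemma const_false: "(\<forall>i\<in>X. \<forall>j\<in>Y. \<not> M i j) \<Longrightarrow> constant_cell M X Y"
  unfolding constant_cell_def by blast

lemma const_intro:
  assumes a: "\<forall>i\<in>X. \<forall>i'\<in>X. \<forall>j\<in>Y. M i j = M i' j" and b: "\<forall>i\<in>X. \<forall>j\<in>Y. \<forall>j'\<in>Y. M i j = M i j'"
  shows "constant_cell M X Y"
  unfolding constant_cell_def
proof (intro ballI)
  fix i j i' j' assume h: "i \<in> X" "j \<in> Y" "i' \<in> X" "j' \<in> Y"
  have 1: "M i j = M i' j" using a h by blast
  have 2: "M i' j = M i' j'" using b h by blast
  show "M i j = M i' j'" using 1 2 by (rule trans)
qed

lemma card3: "card {a, b, c::nat} \<le> 3"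
  by (simp add: card_insert_if)

lemma inS:
  assumes "inblk (Suc h) c a" "a mod 2^h = 0 \<or> a mod 2^h = 2^h - 1"
  shows "a \<in> {c*2^Suc h, c*2^Suc h + 2^h - 1, c*2^Suc h + 2^h}"
proof -
  have d: "a div 2^Suc h = c" and t: "a mod 2^Suc h \<noteq> 2^Suc h - 1"
    using assms(1) unfolding inblk_def ht_lt_iff by auto
  have a: "a = c * 2^Suc h + a mod 2^Suc h" using d by (metis div_mult_mod_eq)
  have m: "a mod 2^Suc h = a mod 2^h + 2^h * ((a div 2^h) mod 2)" by (rule mod_Suc_pow)
  have p: "(2::nat)^Suc h = 2 * 2^h" by simp
  have p1: "(1::nat) \<le> 2^h" by simp
  have "(a div 2^h) mod 2 = 0 \<or> (a div 2^h) mod 2 = 1" by auto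
  then have "a mod 2^Suc h = 0 \<or> a mod 2^Suc h = 2^h - 1 \<or> a mod 2^Suc h = 2^h"
    using assms(2) m t p p1 by auto
  then show ?thesis using a by auto
qed

lemma Mt_sym: "Mt K x y = Mt K y x"
  unfolding Mt_def using tcomp_sym by blast

lemma const_sym: "constant_cell (Mt K) X Y = constant_cell (Mt K) Y X"
proof -
  have "constant_cell (Mt K) Y X" if "constant_cell (Mt K) X Y" for X Y
    using that unfolding constant_cell_def
  proof (intro ballI)
    fix i j i' j' assume c: "\<forall>i\<in>X. \<forall>j\<in>Y. \<forall>i'\<in>X. \<forall>j'\<in>Y. Mt K i j = Mt K i' j'"
      and "i \<in> Y" "j \<in> X" "i' \<in> Y" "j' \<in> X"
    then have "Mt K j i = Mt K j' i'" by blast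
    then show "Mt K i j = Mt K i' j'" using Mt_sym by simp
  qed
  then show ?thesis by blast
qed

lemma parts_finite: "D \<subseteq> {1..<n} \<Longrightarrow> finite (parts n D)"
  by (rule finite_subset[of _ "Pow {..<n}"]) (use parts_sub in blast, simp)

lemma row_tree:
  assumes K: "1 \<le> K" and nN: "2^K - 1 \<le> n"
    and Er: "EE K n (Suc h) \<subseteq> Dr" and Dr: "Dr \<subseteq> {1..<n}"
    and Ec: "EE K n (Suc h) \<subseteq> Dc" and Dc: "Dc \<subseteq> EE K n h"
    and X: "X \<in> parts n Dr"
  shows "card {Y \<in> parts n Dc. \<not> constant_cell (Mt K) X Y} \<le> 3"
proof -
  let ?N = "(2::nat)^K - 1"
  have Dc1: "Dc \<subseteq> {1..<n}" using Dc EE_sub by blast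
  show ?thesis
  proof (cases "\<exists>x\<in>X. x < ?N")
    case False
    then have e: "{Y \<in> parts n Dc. \<not> constant_cell (Mt K) X Y} = {}"
      using const_false[of X Y "Mt K" for Y] unfolding Mt_def by auto
    show ?thesis unfolding e by simp
  next
    case True
    then obtain x where x: "x \<in> X" "x < ?N" by blast
    define c where "c = x div 2^Suc h"
    have cX: "X \<subseteq> {..<?N}" "(X = {x} \<and> Suc h \<le> ht x) \<or> (\<forall>z\<in>X. inblk (Suc h) c z)"
      using cell[OF X Er Dr x K] c_def by auto
    define S where "S = {c*2^Suc h, c*2^Suc h + 2^h - 1, c*2^Suc h + 2^h}"
    have sub: "{Y \<in> parts n Dc. \<not> constant_cell (Mt K) X Y} \<subseteq> {Y \<in> parts n Dc. Y \<inter> S \<noteq> {}}"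
    proof (intro subsetI CollectI conjI)
      fix Y assume "Y \<in> {Y \<in> parts n Dc. \<not> constant_cell (Mt K) X Y}"
      then have Y: "Y \<in> parts n Dc" and nc: "\<not> constant_cell (Mt K) X Y" by auto
      then show "Y \<in> parts n Dc" by simp
      have "\<exists>y\<in>Y. y < ?N"
      proof (rule ccontr)
        assume "\<not> (\<exists>y\<in>Y. y < ?N)"
        then have "constant_cell (Mt K) X Y" by (intro const_false) (auto simp: Mt_def)
        then show False using nc by simp
      qed
      then obtain y where y: "y \<in> Y" "y < ?N" by blast
      define c' where "c' = y div 2^Suc h"
      have cY: "Y \<subseteq> {..<?N}" "(Y = {y} \<and> Suc h \<le> ht y) \<or> (\<forall>z\<in>Y. inblk (Suc h) c' z)"
        using cell[OF Y Ec Dc1 y K] c'_def by auto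
      have MT: "Mt K i j = tcomp i j" if "i \<in> X" "j \<in> Y" for i j
        using that cX(1) cY(1) unfolding Mt_def by auto
      show "Y \<inter> S \<noteq> {}"
      proof (cases "X = {x} \<and> Suc h \<le> ht x")
        case Xt: True
        have nxb: "\<not> inblk (Suc h) c' x" using Xt unfolding inblk_def by simp
        have "constant_cell (Mt K) X Y"
        proof (rule const_intro)
          show "\<forall>i\<in>X. \<forall>i'\<in>X. \<forall>j\<in>Y. Mt K i j = Mt K i' j" using Xt by simp
          show "\<forall>i\<in>X. \<forall>j\<in>Y. \<forall>j'\<in>Y. Mt K i j = Mt K i j'"
          proof (cases "Y = {y} \<and> Suc h \<le> ht y")
            case True then show ?thesis by simp
          next
            case False
            then have "\<forall>z\<in>Y. inblk (Suc h) c' z" using cY(2) by blast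
            then show ?thesis using MT Klem[OF nxb] Xt by simp
          qed
        qed
        then show ?thesis using nc by simp
      next
        case Xf: False
        then have Xb: "\<forall>z\<in>X. inblk (Suc h) c z" using cX(2) by blast
        show ?thesis
        proof (cases "Y = {y} \<and> Suc h \<le> ht y")
          case Yt: True
          have nyb: "\<not> inblk (Suc h) c y" using Yt unfolding inblk_def by simp
          have "constant_cell (Mt K) X Y"
          proof (rule const_intro)
            show "\<forall>i\<in>X. \<forall>i'\<in>X. \<forall>j\<in>Y. Mt K i j = Mt K i' j"
            proof (intro ballI)
              fix i i' j assume ij: "i \<in> X" "i' \<in> X" "j \<in> Y"
              then have j: "j = y" using Yt by simp
              have "tcomp y i = tcomp y i'" using Klem[OF nyb] Xb ij by blast
              then show "Mt K i j = Mt K i' j" using MT ij j tcomp_sym by metis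
            qed
            show "\<forall>i\<in>X. \<forall>j\<in>Y. \<forall>j'\<in>Y. Mt K i j = Mt K i j'" using Yt by simp
          qed
          then show ?thesis using nc by simp
        next
          case Yf: False
          then have Yb: "\<forall>z\<in>Y. inblk (Suc h) c' z" using cY(2) by blast
          have cc: "c' = c"
          proof (rule ccontr)
            assume "c' \<noteq> c"
            have "\<forall>i\<in>X. \<forall>j\<in>Y. \<not> Mt K i j"
            proof (intro ballI)
              fix i j assume ij: "i \<in> X" "j \<in> Y"
              have "\<not> tcomp i j" using K5[of "Suc h" c i c' j] Xb Yb ij \<open>c' \<noteq> c\<close> by auto
              then show "\<not> Mt K i j" using MT ij by simp
            qed
            then have "constant_cell (Mt K) X Y" by (rule const_false)
            then show False using nc by simp
          qed
          obtain a' b' where ab: "Y = {a'..<b'}" "a' < b'" "a' = 0 \<or> a' \<in> Dc"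
            using Y by (rule partsE)
          have aY: "a' \<in> Y" using ab by simp
          have aN: "a' < ?N" using aY cY(1) by auto
          have "a' mod 2^h = 0 \<or> a' mod 2^h = 2^h - 1"
            using ab(3) Dc aN unfolding EE_def by auto
          then have "a' \<in> S" using inS[of h c a'] Yb aY cc unfolding S_def by simp
          then show ?thesis using aY by blast
        qed
      qed
    qed
    have "card {Y \<in> parts n Dc. \<not> constant_cell (Mt K) X Y} \<le> card {Y \<in> parts n Dc. Y \<inter> S \<noteq> {}}"
      by (rule card_mono[OF _ sub]) (use parts_finite[OF Dc1] in simp)
    also have "\<dots> \<le> card S"
      by (rule card_hit) (use parts_disj[OF Dc1] S_def in auto)
    also have "\<dots> \<le> 3" unfolding S_def by (rule card3)
    finally show ?thesis .
  qed
qed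

definition FF :: "nat \<Rightarrow> nat \<Rightarrow> nat set" where
  "FF K n = {b. 0 < b \<and> b < n \<and> 2^K - 1 \<le> b}"

lemma row_fin:
  assumes Dc: "Dc \<subseteq> FF K n" and X: "X \<in> parts n Dr"
  shows "card {Y \<in> parts n Dc. \<not> constant_cell (Mt K) X Y} \<le> 3"
proof -
  let ?N = "(2::nat)^K - 1"
  have Dc1: "Dc \<subseteq> {1..<n}" using Dc unfolding FF_def by auto
  have sub: "{Y \<in> parts n Dc. \<not> constant_cell (Mt K) X Y} \<subseteq> {Y \<in> parts n Dc. Y \<inter> {0} \<noteq> {}}"
  proof (intro subsetI CollectI conjI)
    fix Y assume "Y \<in> {Y \<in> parts n Dc. \<not> constant_cell (Mt K) X Y}"
    then have Y: "Y \<in> parts n Dc" and nc: "\<not> constant_cell (Mt K) X Y" by auto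
    then show "Y \<in> parts n Dc" by simp
    have "\<exists>y\<in>Y. y < ?N"
    proof (rule ccontr)
      assume "\<not> (\<exists>y\<in>Y. y < ?N)"
      then have "constant_cell (Mt K) X Y" by (intro const_false) (auto simp: Mt_def)
      then show False using nc by simp
    qed
    then obtain y where y: "y \<in> Y" "y < ?N" by blast
    obtain a' b' where ab: "Y = {a'..<b'}" "a' < b'" "a' = 0 \<or> a' \<in> Dc"
      using Y by (rule partsE)
    have "a' \<le> y" using y ab by simp
    then have "a' = 0" using ab(3) Dc y unfolding FF_def by auto
    then show "Y \<inter> {0} \<noteq> {}" using ab by auto
  qed
  have "card {Y \<in> parts n Dc. \<not> constant_cell (Mt K) X Y} \<le> card {Y \<in> parts n Dc. Y \<inter> {0} \<noteq> {}}"
    by (rule card_mono[OF _ sub]) (use parts_finite[OF Dc1] in simp)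
  also have "\<dots> \<le> card {0::nat}"
    by (rule card_hit) (use parts_disj[OF Dc1] in auto)
  finally show ?thesis by simp
qed



definition good :: "nat \<Rightarrow> nat \<Rightarrow> nat set \<Rightarrow> nat set \<Rightarrow> bool" where
  "good K n Dr Dc \<longleftrightarrow> Dr \<subseteq> {1..<n} \<and> Dc \<subseteq> {1..<n} \<and>
     ((\<exists>h. EE K n (Suc h) \<subseteq> Dr \<and> Dr \<subseteq> EE K n h \<and> EE K n (Suc h) \<subseteq> Dc \<and> Dc \<subseteq> EE K n h)
      \<or> (Dr \<subseteq> FF K n \<and> Dc \<subseteq> FF K n))"

lemma rows_ok:
  assumes K: "1 \<le> K" and nN: "2^K - 1 \<le> n" and g: "good K n Dr Dc" and X: "X \<in> parts n Dr"
  shows "card {Y \<in> parts n Dc. \<not> constant_cell (Mt K) X Y} \<le> 3"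
proof -
  have Dr: "Dr \<subseteq> {1..<n}" using g unfolding good_def by simp
  from g have "(\<exists>h. EE K n (Suc h) \<subseteq> Dr \<and> Dr \<subseteq> EE K n h \<and> EE K n (Suc h) \<subseteq> Dc \<and> Dc \<subseteq> EE K n h)
      \<or> (Dr \<subseteq> FF K n \<and> Dc \<subseteq> FF K n)" unfolding good_def by simp
  then show ?thesis
  proof
    assume "\<exists>h. EE K n (Suc h) \<subseteq> Dr \<and> Dr \<subseteq> EE K n h \<and> EE K n (Suc h) \<subseteq> Dc \<and> Dc \<subseteq> EE K n h"
    then obtain h where h: "EE K n (Suc h) \<subseteq> Dr" "EE K n (Suc h) \<subseteq> Dc" "Dc \<subseteq> EE K n h" by blast
    show ?thesis by (rule row_tree[OF K nN h(1) Dr h(2) h(3) X])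
  next
    assume "Dr \<subseteq> FF K n \<and> Dc \<subseteq> FF K n"
    then show ?thesis using row_fin X by blast
  qed
qed

lemma good_sym: "good K n Dr Dc = good K n Dc Dr"
  unfolding good_def by blast

lemma good_wide:
  assumes K: "1 \<le> K" and nN: "2^K - 1 \<le> n" and g: "good K n Dr Dc"
  shows "d_wide 3 (Mt K) (parts n Dr, parts n Dc)"
  unfolding d_wide_def fst_conv snd_conv
proof (intro conjI ballI)
  fix X assume "X \<in> parts n Dr"
  then show "card {Y \<in> parts n Dc. \<not> constant_cell (Mt K) X Y} \<le> 3" by (rule rows_ok[OF K nN g])
next
  fix Y assume Y: "Y \<in> parts n Dc"
  have "{X \<in> parts n Dr. \<not> constant_cell (Mt K) X Y} = {X \<in> parts n Dr. \<not> constant_cell (Mt K) Y X}"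
    using const_sym by blast
  also have "card \<dots> \<le> 3" using rows_ok[OF K nN _ Y] g good_sym by blast
  finally show "card {X \<in> parts n Dr. \<not> constant_cell (Mt K) X Y} \<le> 3" .
qed

inductive reach :: "nat \<Rightarrow> nat \<Rightarrow> nat set \<times> nat set \<Rightarrow> nat set \<times> nat set \<Rightarrow> bool" for K n where
  rrefl: "good K n (fst s) (snd s) \<Longrightarrow> reach K n s s"
| rrow: "reach K n s (Dr, Dc) \<Longrightarrow> d \<in> Dr \<Longrightarrow> good K n (Dr - {d}) Dc \<Longrightarrow> reach K n s (Dr - {d}, Dc)"
| rcol: "reach K n s (Dr, Dc) \<Longrightarrow> d \<in> Dc \<Longrightarrow> good K n Dr (Dc - {d}) \<Longrightarrow> reach K n s (Dr, Dc - {d})"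

lemma reach_good: "reach K n s t \<Longrightarrow> good K n (fst t) (snd t)"
  by (induction rule: reach.induct) auto

definition PP :: "nat \<Rightarrow> nat set \<times> nat set \<Rightarrow> division" where
  "PP n s = (parts n (fst s), parts n (snd s))"

lemma snoc_chain:
  assumes "ds \<noteq> []" "\<forall>k. Suc k < length ds \<longrightarrow> R (ds!k) (ds!Suc k)" "R (last ds) u"
  shows "\<forall>k. Suc k < length (ds @ [u]) \<longrightarrow> R ((ds @ [u])!k) ((ds @ [u])!Suc k)"
proof (intro allI impI)
  fix k assume k: "Suc k < length (ds @ [u])"
  show "R ((ds @ [u])!k) ((ds @ [u])!Suc k)"
  proof (cases "Suc k < length ds")
    case True then show ?thesis using assms(2) by (simp add: nth_append)
  next
    case False
    then have "k = length ds - 1" using k by simp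
    then have "(ds @ [u])!k = last ds" "(ds @ [u])!Suc k = u"
      using assms(1) by (auto simp: nth_append last_conv_nth)
    then show ?thesis using assms(3) by simp
  qed
qed

lemma reach_seq:
  assumes K: "1 \<le> K" and nN: "2^K - 1 \<le> n" and r: "reach K n s t"
  shows "\<exists>ds. ds \<noteq> [] \<and> hd ds = PP n s \<and> last ds = PP n t \<and>
     (\<forall>k. Suc k < length ds \<longrightarrow> division_step (ds!k) (ds!Suc k)) \<and> (\<forall>D\<in>set ds. d_wide 3 (Mt K) D)"
  using r
proof (induction rule: reach.induct)
  case (rrefl s)
  show ?case
    by (rule exI[of _ "[PP n s]"]) (use good_wide[OF K nN rrefl] in \<open>auto simp: PP_def\<close>)
next
  case (rrow s Dr Dc d)
  then obtain ds where ds: "ds \<noteq> []" "hd ds = PP n s" "last ds = PP n (Dr, Dc)"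
     "\<forall>k. Suc k < length ds \<longrightarrow> division_step (ds!k) (ds!Suc k)" "\<forall>D\<in>set ds. d_wide 3 (Mt K) D" by blast
  have Dr: "Dr \<subseteq> {1..<n}" using reach_good[OF rrow(1)] unfolding good_def by simp
  have st: "division_step (last ds) (PP n (Dr - {d}, Dc))"
    unfolding ds(3) division_step_def PP_def using parts_merge[OF Dr rrow(2)] by simp
  show ?case
  proof (rule exI[of _ "ds @ [PP n (Dr - {d}, Dc)]"], intro conjI)
    show "\<forall>k. Suc k < length (ds @ [PP n (Dr - {d}, Dc)]) \<longrightarrow>
      division_step ((ds @ [PP n (Dr - {d}, Dc)]) ! k) ((ds @ [PP n (Dr - {d}, Dc)]) ! Suc k)"
      by (rule snoc_chain[OF ds(1) ds(4) st])
    show "\<forall>D\<in>set (ds @ [PP n (Dr - {d}, Dc)]). d_wide 3 (Mt K) D"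
      using ds(5) good_wide[OF K nN rrow(3)] unfolding PP_def by auto
  qed (use ds in auto)
next
  case (rcol s Dr Dc d)
  then obtain ds where ds: "ds \<noteq> []" "hd ds = PP n s" "last ds = PP n (Dr, Dc)"
     "\<forall>k. Suc k < length ds \<longrightarrow> division_step (ds!k) (ds!Suc k)" "\<forall>D\<in>set ds. d_wide 3 (Mt K) D" by blast
  have Dc: "Dc \<subseteq> {1..<n}" using reach_good[OF rcol(1)] unfolding good_def by simp
  have st: "division_step (last ds) (PP n (Dr, Dc - {d}))"
    unfolding ds(3) division_step_def PP_def using parts_merge[OF Dc rcol(2)] by simp
  show ?case
  proof (rule exI[of _ "ds @ [PP n (Dr, Dc - {d})]"], intro conjI)
    show "\<forall>k. Suc k < length (ds @ [PP n (Dr, Dc - {d})]) \<longrightarrow>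
      division_step ((ds @ [PP n (Dr, Dc - {d})]) ! k) ((ds @ [PP n (Dr, Dc - {d})]) ! Suc k)"
      by (rule snoc_chain[OF ds(1) ds(4) st])
    show "\<forall>D\<in>set (ds @ [PP n (Dr, Dc - {d})]). d_wide 3 (Mt K) D"
      using ds(5) good_wide[OF K nN rcol(3)] unfolding PP_def by auto
  qed (use ds in auto)
qed

lemma reach_rows:
  assumes "finite R"
  shows "R \<subseteq> Dr \<Longrightarrow> (\<forall>R'\<subseteq>R. good K n (Dr - R') Dc) \<Longrightarrow> reach K n s (Dr, Dc) \<Longrightarrow> reach K n s (Dr - R, Dc)"
  using assms
proof (induction R rule: finite_induct)
  case empty then show ?case by simp
next
  case (insert d R)
  have r: "reach K n s (Dr - R, Dc)" using insert by blast
  have e: "Dr - R - {d} = Dr - insert d R" by auto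
  have g: "good K n (Dr - insert d R) Dc" using insert.prems(2) by blast
  have "reach K n s (Dr - R - {d}, Dc)"
    by (rule rrow[OF r]) (use insert g e in auto)
  then show ?case using e by simp
qed

lemma reach_cols:
  assumes "finite R"
  shows "R \<subseteq> Dc \<Longrightarrow> (\<forall>R'\<subseteq>R. good K n Dr (Dc - R')) \<Longrightarrow> reach K n s (Dr, Dc) \<Longrightarrow> reach K n s (Dr, Dc - R)"
  using assms
proof (induction R rule: finite_induct)
  case empty then show ?case by simp
next
  case (insert d R)
  have r: "reach K n s (Dr, Dc - R)" using insert by blast
  have e: "Dc - R - {d} = Dc - insert d R" by auto
  have g: "good K n Dr (Dc - insert d R)" using insert.prems(2) by blast
  have "reach K n s (Dr, Dc - R - {d})"
    by (rule rcol[OF r]) (use insert g e in auto)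
  then show ?case using e by simp
qed



lemma EE_mono: "EE K n (Suc h) \<subseteq> EE K n h"
proof
  fix b assume "b \<in> EE K n (Suc h)"
  then have b: "0 < b" "b < n" "2^K - 1 \<le> b \<or> b mod 2^Suc h = 0 \<or> b mod 2^Suc h = 2^Suc h - 1"
    unfolding EE_def by auto
  have "b mod 2^Suc h = 0 \<Longrightarrow> b mod 2^h = 0"
    by (metis dvd_eq_mod_eq_0 dvd_trans le_imp_power_dvd le_SucI order_refl)
  moreover have "b mod 2^Suc h = 2^Suc h - 1 \<Longrightarrow> b mod 2^h = 2^h - 1"
    using ht_char[of "Suc h" b] ht_char[of h b] by simp
  ultimately show "b \<in> EE K n h" using b unfolding EE_def by auto
qed

lemma EE_0: "EE K n 0 = {1..<n}" unfolding EE_def by auto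

lemma EE_K: "EE K n K = FF K n"
proof -
  have "b mod 2^K \<noteq> 0 \<and> b mod 2^K \<noteq> 2^K - 1" if "0 < b" "b < 2^K - 1" for b :: nat
  proof -
    have "b < 2^K" using that by simp
    then have "b mod 2^K = b" by simp
    then show ?thesis using that by simp
  qed
  then show ?thesis unfolding EE_def FF_def
  proof (intro set_eqI iffI)
    fix b :: nat assume h: "\<And>b::nat. 0 < b \<Longrightarrow> b < 2^K - 1 \<Longrightarrow> b mod 2^K \<noteq> 0 \<and> b mod 2^K \<noteq> 2^K - 1"
      and "b \<in> {b. 0 < b \<and> b < n \<and> (2^K - 1 \<le> b \<or> b mod 2^K = 0 \<or> b mod 2^K = 2^K - 1)}"
    then have b: "0 < b" "b < n" "2^K - 1 \<le> b \<or> b mod 2^K = 0 \<or> b mod 2^K = 2^K - 1" by auto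
    have "2^K - 1 \<le> b"
    proof (rule ccontr)
      assume "\<not> 2^K - 1 \<le> b"
      then have "b < 2^K - 1" by simp
      then have "b mod 2^K \<noteq> 0" "b mod 2^K \<noteq> 2^K - 1" using h[OF b(1)] by auto
      then show False using b(3) \<open>b < 2^K - 1\<close> by linarith
    qed
    then show "b \<in> {b. 0 < b \<and> b < n \<and> 2^K - 1 \<le> b}" using b by simp
  qed auto
qed

lemma stage:
  assumes "reach K n s (EE K n h, EE K n h)"
  shows "reach K n s (EE K n (Suc h), EE K n (Suc h))"
proof -
  let ?R = "EE K n h - EE K n (Suc h)"
  have fin: "finite ?R" using EE_sub[of K n h] finite_subset by blast
  have m: "EE K n (Suc h) \<subseteq> EE K n h" by (rule EE_mono)
  have e: "EE K n h - ?R = EE K n (Suc h)" using m by blast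
  have s1: "EE K n h \<subseteq> {1..<n}" "EE K n (Suc h) \<subseteq> {1..<n}" using EE_sub by blast+
  have r1: "reach K n s (EE K n h - ?R, EE K n h)"
  proof (rule reach_rows[OF fin])
    show "?R \<subseteq> EE K n h" by blast
    show "\<forall>R'\<subseteq>?R. good K n (EE K n h - R') (EE K n h)"
      unfolding good_def using s1 m by blast
  qed (rule assms)
  have r2: "reach K n s (EE K n (Suc h), EE K n h - ?R)"
  proof (rule reach_cols[OF fin])
    show "?R \<subseteq> EE K n h" by blast
    show "\<forall>R'\<subseteq>?R. good K n (EE K n (Suc h)) (EE K n h - R')"
      unfolding good_def using s1 m by blast
  qed (use r1 e in simp)
  then show ?thesis using e by simp
qed

lemma all_stages:
  assumes "reach K n s (EE K n 0, EE K n 0)"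
  shows "reach K n s (EE K n h, EE K n h)"
  by (induction h) (use assms stage in auto)

lemma twin_ord:
  assumes K: "1 \<le> K" and nN: "2^K - 1 \<le> n"
  shows "twin_ordered n 3 (Mt K)"
proof -
  have "(2::nat)^1 \<le> 2^K" by (rule power_increasing) (use K in auto)
  then have n0: "0 < n" using nN by simp
  let ?s = "({1..<n}, {1..<n})"
  have g0: "good K n {1..<n} {1..<n}"
    unfolding good_def using EE_mono[of K n 0] EE_0[of K n] by auto
  have r0: "reach K n ?s ?s" by (rule rrefl) (use g0 in simp)
  have rK: "reach K n ?s (FF K n, FF K n)"
    using all_stages[of K n ?s K] r0 EE_0 EE_K by simp
  have finF: "finite (FF K n)" unfolding FF_def by simp
  have FF1: "FF K n \<subseteq> {1..<n}" unfolding FF_def by auto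
  have r1: "reach K n ?s (FF K n - FF K n, FF K n)"
    by (rule reach_rows[OF finF]) (use rK FF1 in \<open>auto simp: good_def\<close>)
  have r2: "reach K n ?s ({}, FF K n - FF K n)"
    by (rule reach_cols[OF finF]) (use r1 FF1 in \<open>auto simp: good_def\<close>)
  obtain ds where ds: "ds \<noteq> []" "hd ds = PP n ?s" "last ds = PP n ({}, {})"
     "\<forall>k. Suc k < length ds \<longrightarrow> division_step (ds!k) (ds!Suc k)" "\<forall>D\<in>set ds. d_wide 3 (Mt K) D"
    using reach_seq[OF K nN r2] by auto
  have "merge_sequence n ds"
    unfolding merge_sequence_def using ds parts_single parts_empty[OF n0] by (simp add: PP_def)
  then show ?thesis unfolding twin_ordered_def using ds(5) by blast
qed

lemma tww:
  assumes K: "1 \<le> K" and nN: "2^K - 1 \<le> n"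
  shows "twin_width n (Mt K) \<le> 3"
proof -
  have "\<exists>\<sigma> \<tau>. \<sigma> permutes {..<n} \<and> \<tau> permutes {..<n} \<and> twin_ordered n 3 (\<lambda>i j. Mt K (\<sigma> i) (\<tau> j))"
    using twin_ord[OF K nN] permutes_id by (intro exI[of _ id]) auto
  then show ?thesis unfolding twin_width_def by (rule Least_le)
qed



lemma transpose_Mt: "transpose_mat (Mt K) = Mt K"
  unfolding transpose_mat_def using Mt_sym by (intro ext) simp

lemma main_bound:
  assumes K: "10 \<le> K" and n1: "2^K \<le> n + 1" and n2: "n + 1 < 2^(K+1)"
  shows "(1/8) * real n * ln (real n) \<le> real (row_hamming_coherence n (Mt K))"
proof -
  have nN: "2^K - 1 \<le> n" using n1 by simp
  have "(2::nat)^1 \<le> 2^K" by (rule power_increasing) (use K in auto)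
  then have n1': "1 \<le> n" using n1 by simp
  have c: "(K+2) * 2^K \<le> 2 * row_hamming_coherence n (Mt K) + 6 * 2^K"
    by (rule coh_Mt[OF nN n1'])
  define P where "P = real (2^K)"
  have P0: "0 < P" unfolding P_def by simp
  have cr: "real (K+2) * P \<le> 2 * real (row_hamming_coherence n (Mt K)) + 6 * P"
  proof -
    have "real ((K+2) * 2^K) \<le> real (2 * row_hamming_coherence n (Mt K) + 6 * 2^K)"
      using c by (simp only: of_nat_le_iff)
    then show ?thesis unfolding P_def by (simp add: algebra_simps)
  qed
  have nP: "real n < 2 * P"
  proof -
    have "n < 2^(K+1)" using n2 by simp
    then have "real n < real ((2::nat)^(K+1))" by (simp only: of_nat_less_iff)
    then show ?thesis unfolding P_def by simp
  qed
  have nge: "1 \<le> real n" using n1' by simp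
  have ln1: "ln (real n) \<le> real (K+1)"
  proof -
    have "ln (real n) \<le> ln (2 * P)" using nP nge by simp
    also have "2 * P = 2 ^ (K+1)" unfolding P_def by simp
    also have "ln ((2::real) ^ (K+1)) = real (K+1) * ln 2" by (rule ln_realpow)
    also have "\<dots> \<le> real (K+1) * 1" using ln_2_less_1 by (intro mult_left_mono) auto
    finally show ?thesis by simp
  qed
  have ln0: "0 \<le> ln (real n)" using nge by simp
  have "(1/8) * real n * ln (real n) \<le> (1/8) * (2 * P) * real (K+1)"
    using nP ln1 ln0 P0 nge by (intro mult_mono) auto
  also have "\<dots> \<le> real (row_hamming_coherence n (Mt K))"
  proof -
    have "real K \<ge> 10" using K by simp
    then have "(1/8) * (2 * P) * real (K+1) \<le> (real (K+2) * P - 6 * P) / 2"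
      using P0 by (simp add: field_simps)
    moreover have "(real (K+2) * P - 6 * P) / 2 \<le> real (row_hamming_coherence n (Mt K))"
      using cr by (simp add: field_simps)
    ultimately show ?thesis by (rule order_trans)
  qed
  finally show ?thesis .
qed

theorem theorem4:
  shows "\<exists>c::real. c > 0 \<and> (\<exists>N::nat. \<forall>n\<ge>N. \<exists>M::bmat.
           twin_width n M \<le> 3 \<and>
           real (row_hamming_coherence n M) \<ge> c * real n * ln (real n) \<and>
           real (col_hamming_coherence n M) \<ge> c * real n * ln (real n))"
proof (rule exI[of _ "1/8"], intro conjI exI[of _ "1023::nat"] allI impI)
  show "(0::real) < 1/8" by simp
  fix n :: nat assume n: "1023 \<le> n"
  obtain K where K: "2^K \<le> n + 1" "n + 1 < 2^(K+1)"
    using ex_power_ivl1[of 2 "n+1"] by auto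
  have K10: "10 \<le> K"
  proof (rule ccontr)
    assume "\<not> 10 \<le> K"
    then have "K + 1 \<le> 10" by simp
    then have "(2::nat)^(K+1) \<le> 2^10" by (rule power_increasing) simp
    then show False using K(2) n by simp
  qed
  have K1: "1 \<le> K" using K10 by simp
  have nN: "2^K - 1 \<le> n" using K(1) by simp
  show "\<exists>M. twin_width n M \<le> 3 \<and> 1/8 * real n * ln (real n) \<le> real (row_hamming_coherence n M)
        \<and> 1/8 * real n * ln (real n) \<le> real (col_hamming_coherence n M)"
  proof (intro exI conjI)
    show "twin_width n (Mt K) \<le> 3" by (rule tww[OF K1 nN])
    show "1/8 * real n * ln (real n) \<le> real (row_hamming_coherence n (Mt K))"
      by (rule main_bound[OF K10 K])
    show "1/8 * real n * ln (real n) \<le> real (col_hamming_coherence n (Mt K))"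
      unfolding col_hamming_coherence_def transpose_Mt by (rule main_bound[OF K10 K])
  qed
qed

end
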